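(* Let $T$ satisfy the general-arrival assumptions (A1)–(A5), let $S_1,S_2,\dots$ be i.i.d. nonnegative with $\mathbb E[S_1^2]<\infty$, $\beta\in\mathbb R$, $D_j:=\frac{S_j}{n}(1+\beta n^{-1/3})$, $\Sigma_k:=\sum_{j=1}^kD_j$. Then for every $t>0$, as $n\to\infty$, $$\sup_{1\le k\le tn^{2/3}} n^{4/3}\,\mathbb E\big[|F_T(\Sigma_k)-F_T(\Sigma_{k-1})-f_T(\Sigma_{k-1})D_k|\,\big|\,\Sigma_{k-1}\big]\xrightarrow{\mathbb P}0,$$ $$\sup_{1\le k\le tn^{2/3}} n^{2}\,\mathbb E\big[|D_k(F_T(\Sigma_k)-F_T(\Sigma_{k-1})-f_T(\Sigma_{k-1})D_k)|\,\big|\,\Sigma_{k-1}\big]\xrightarrow{\mathbb P}0,$$ $$\sup_{1\le k\le tn^{2/3}} n^{2}\,\mathbb E\big[|F_T(\Sigma_k)-F_T(\Sigma_{k-1})-f_T(\Sigma_{k-1})D_k|^2\,\big|\,\Sigma_{k-1}\big]\xrightarrow{\mathbb P}0.$$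
   Context: General-arrival assumptions on the distribution function $F_T$ of $T$: (A1) $T$ has a positive continuous density $f_T$ on $[0,\infty)$ with $f_T(0)\in(0,\infty)$; (A2) for every $\bar x\in(0,\infty)$, $F_T(x)-F_T(\bar x)=f_T(\bar x)(x-\bar x)+o(|x-\bar x|^{4/3})$ as $x\to\bar x$; (A3) for every $C>0$, $\sup_{\bar x\le Cy^{1/3}}|F_T(\bar x+y)-F_T(\bar x)-f_T(\bar x)y|=o(y)$ as $y\downarrow0$; (A4) $f_T'$ exists and is continuous in a neighbourhood of $0$; (A5) $f_T(0)=\sup_{x\ge0}f_T(x)$. *)

theory Defs
  imports "HOL-Probability.Probability" "HOL-Library.Landau_Symbols"
begin

definition general_arrival :: "(real \<Rightarrow> real) \<Rightarrow> (real \<Rightarrow> real) \<Rightarrow> bool" where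
  "general_arrival F f \<longleftrightarrow>
     \<comment> \<open>(A1): T has a positive continuous density f on [0,inf), F its distribution function\<close>
     (\<forall>x\<ge>0. f x > 0) \<and> continuous_on {0..} f \<and> (f has_integral 1) {0..} \<and>
     (\<forall>x. F x = (if x < 0 then 0 else integral {0..x} f)) \<and>
     \<comment> \<open>(A2)\<close>
     (\<forall>xb>0. (\<lambda>x. F x - F xb - f xb * (x - xb)) \<in> o[at xb](\<lambda>x. \<bar>x - xb\<bar> powr (4/3))) \<and>
     \<comment> \<open>(A3): sup over 0 <= xb <= C y^(1/3) is o(y) as y goes to 0 from the right\<close>
     (\<forall>C>0. \<forall>\<epsilon>>0. eventually (\<lambda>y. \<forall>xb\<in>{0..C * y powr (1/3)}.
         \<bar>F (xb + y) - F xb - f xb * y\<bar> \<le> \<epsilon> * y) (at_right 0)) \<and>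
     \<comment> \<open>(A4): f' exists and is continuous on a neighbourhood [0,delta) of 0 in [0,inf)\<close>
     (\<exists>\<delta>>0. \<exists>f'. (\<forall>x\<in>{0..<\<delta>}. (f has_real_derivative f' x) (at x within {0..}))
                  \<and> continuous_on {0..<\<delta>} f') \<and>
     \<comment> \<open>(A5)\<close>
     (\<forall>x\<ge>0. f x \<le> f 0)"

definition Dn :: "real \<Rightarrow> (nat \<Rightarrow> 'a \<Rightarrow> real) \<Rightarrow> nat \<Rightarrow> nat \<Rightarrow> 'a \<Rightarrow> real" where
  "Dn \<beta> S n j \<omega> = S j \<omega> / real n * (1 + \<beta> * real n powr (-1/3))"

definition Sigman :: "real \<Rightarrow> (nat \<Rightarrow> 'a \<Rightarrow> real) \<Rightarrow> nat \<Rightarrow> nat \<Rightarrow> 'a \<Rightarrow> real" where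
  "Sigman \<beta> S n k \<omega> = (\<Sum>j\<in>{1..k}. Dn \<beta> S n j \<omega>)"

definition cond_exp_given :: "'a measure \<Rightarrow> ('a \<Rightarrow> real) \<Rightarrow> ('a \<Rightarrow> real) \<Rightarrow> 'a \<Rightarrow> real" where
  "cond_exp_given M X Y = real_cond_exp M (vimage_algebra (space M) X borel) Y"

definition sup_to_zero_in_prob :: "'a measure \<Rightarrow> real \<Rightarrow> (nat \<Rightarrow> nat \<Rightarrow> 'a \<Rightarrow> real) \<Rightarrow> bool" where
  "sup_to_zero_in_prob M t Z \<longleftrightarrow>
     (\<forall>\<epsilon>>0. (\<lambda>n. measure M {\<omega>\<in>space M. \<exists>k. 1 \<le> k \<and> real k \<le> t * real n powr (2/3)
                                        \<and> \<bar>Z n k \<omega>\<bar> > \<epsilon>}) \<longlonglongrightarrow> 0)"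

end

theory Submission
  imports Defs "HOL-Real_Asymp.Real_Asymp"
begin


lemma sfs_vimage:
  assumes "prob_space M" "X \<in> borel_measurable M"
  shows "sigma_finite_subalgebra M (vimage_algebra (space M) X borel)"
proof (rule finite_measure_subalgebra_is_sigma_finite)
  interpret prob_space M by fact
  show "finite_measure_subalgebra M (vimage_algebra (space M) X borel)"
  proof unfold_locales
    show "subalgebra M (vimage_algebra (space M) X borel)"
      unfolding subalgebra_def
    proof
      show "space (vimage_algebra (space M) X borel) = space M" by simp
      show "sets (vimage_algebra (space M) X borel) \<subseteq> sets M"
        using assms(2) by (subst sets_vimage_algebra2) (auto simp: measurable_sets)
    qed
  qed
qed

lemma CE_nonmeas:
  assumes "sigma_finite_subalgebra M F" "\<And>x. h x \<ge> 0" "h \<notin> borel_measurable M"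
  shows "AE x in M. real_cond_exp M F h x = 0"
proof -
  interpret sigma_finite_subalgebra M F by fact
  have nm: "(\<lambda>x. ennreal (h x)) \<notin> borel_measurable M"
  proof
    assume "(\<lambda>x. ennreal (h x)) \<in> borel_measurable M"
    then have "(\<lambda>x. enn2real (ennreal (h x))) \<in> borel_measurable M" by measurable
    then show False using assms(2,3) by simp
  qed
  have z: "(\<lambda>x. ennreal (- h x)) = (\<lambda>x. 0)" using assms(2) by (simp add: ennreal_neg)
  have "AE x in M. (0::ennreal) = nn_cond_exp M F (\<lambda>x. 0) x"
    by (rule nn_cond_exp_F_meas) auto
  then show ?thesis unfolding real_cond_exp_def z using nm
    by (auto simp: nn_cond_exp_def)
qed

lemma CE_loc:
  assumes "sigma_finite_subalgebra M F" "\<And>x. h x \<ge> 0" "A \<in> sets F"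
    "integrable M H" "AE x in M. h x \<le> H x" "integrable M g"
    "AE x in M. x \<in> A \<longrightarrow> h x \<le> g x" "AE x in M. g x \<ge> 0"
  shows "AE x in M. 0 \<le> real_cond_exp M F h x \<and> (x \<in> A \<longrightarrow> real_cond_exp M F h x \<le> real_cond_exp M F g x)"
proof -
  interpret sigma_finite_subalgebra M F by fact
  have gpos: "AE x in M. real_cond_exp M F g x \<ge> 0"
    using assms(6,8) by (intro real_cond_exp_pos) auto
  show ?thesis
  proof (cases "h \<in> borel_measurable M")
    case False
    with CE_nonmeas[OF assms(1,2) False] gpos show ?thesis by auto
  next
    case hm: True
    have hi: "integrable M h"
      by (rule Bochner_Integration.integrable_bound[OF assms(4) hm]) (use assms(2,5) in auto)
    have AM: "A \<in> sets M" using assms(3) subalg by (auto simp: subalgebra_def)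
    have im: "indicator A \<in> borel_measurable F" using assms(3) by simp
    have ii: "integrable M (\<lambda>x. indicator A x * h x)"
      using integrable_mult_indicator[OF AM hi] by simp
    have m1: "AE x in M. real_cond_exp M F (\<lambda>x. indicator A x * h x) x = indicator A x * real_cond_exp M F h x"
      by (rule real_cond_exp_mult[OF im hm ii])
    have m2: "AE x in M. real_cond_exp M F (\<lambda>x. indicator A x * h x) x \<le> real_cond_exp M F g x"
      by (rule real_cond_exp_mono[OF _ ii assms(6)]) (use assms(7,8) in \<open>auto simp: indicator_def\<close>)
    have m3: "AE x in M. real_cond_exp M F h x \<ge> 0"
      using hm assms(2) by (intro real_cond_exp_pos) auto
    show ?thesis using m1 m2 m3 by (auto simp: indicator_def)
  qed
qed

lemma CE_indep:
  fixes X Y :: "'a \<Rightarrow> real" and G :: "real \<Rightarrow> real"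
  assumes "prob_space M" "prob_space.indep_var M borel X borel Y"
    "G \<in> borel_measurable borel" "integrable M (\<lambda>\<omega>. G (Y \<omega>))"
  shows "AE \<omega> in M. real_cond_exp M (vimage_algebra (space M) X borel) (\<lambda>\<omega>. G (Y \<omega>)) \<omega>
      = (\<integral>\<omega>. G (Y \<omega>) \<partial>M)"
proof -
  interpret prob_space M by fact
  have Xm[measurable]: "X \<in> borel_measurable M" using indep_var_rv1[OF assms(2)] .
  have Ym[measurable]: "Y \<in> borel_measurable M" using indep_var_rv2[OF assms(2)] .
  interpret sigma_finite_subalgebra M "vimage_algebra (space M) X borel"
    by (rule sfs_vimage[OF assms(1) Xm])
  show ?thesis
  proof (rule real_cond_exp_charact)
    fix A assume "A \<in> sets (vimage_algebra (space M) X borel)"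
    then obtain B where B: "B \<in> sets borel" "A = X -` B \<inter> space M"
      by (subst (asm) sets_vimage_algebra2) auto
    have ind: "prob_space.indep_var M borel (\<lambda>\<omega>. indicator B (X \<omega>) :: real) borel (\<lambda>\<omega>. G (Y \<omega>))"
      using indep_var_compose[OF assms(2), of "indicator B :: real \<Rightarrow> real" borel G borel] B assms(3)
      by (simp add: comp_def)
    have "(\<integral>\<omega>\<in>A. G (Y \<omega>) \<partial>M) = (\<integral>\<omega>. indicator B (X \<omega>) * G (Y \<omega>) \<partial>M)"
      unfolding set_lebesgue_integral_def using B
      by (intro Bochner_Integration.integral_cong) (auto simp: indicator_def)
    also have "\<dots> = (\<integral>\<omega>. indicator B (X \<omega>) \<partial>M) * (\<integral>\<omega>. G (Y \<omega>) \<partial>M)"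
    proof (rule indep_var_lebesgue_integral[OF ind])
      show "integrable M (\<lambda>\<omega>. indicator B (X \<omega>) :: real)"
        by (rule integrable_const_bound[where B=1]) (use B in \<open>auto simp: indicator_def\<close>)
    qed (use assms(4) in auto)
    also have "(\<integral>\<omega>. indicator B (X \<omega>) \<partial>M) = measure M A"
    proof -
      have "(\<integral>\<omega>. indicator B (X \<omega>) \<partial>M) = (\<integral>\<omega>. indicator A \<omega> \<partial>M)"
        using B by (intro Bochner_Integration.integral_cong) (auto simp: indicator_def)
      also have "\<dots> = measure M A" using B by simp
      finally show ?thesis .
    qed
    also have "measure M A * (\<integral>\<omega>. G (Y \<omega>) \<partial>M) = (\<integral>\<omega>\<in>A. (\<integral>\<omega>. G (Y \<omega>) \<partial>M) \<partial>M)"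
    proof -
      have "A \<in> sets M" using B by simp
      then show ?thesis by (simp add: set_lebesgue_integral_def)
    qed
    finally show "(\<integral>\<omega>\<in>A. G (Y \<omega>) \<partial>M) = (\<integral>\<omega>\<in>A. (\<integral>\<omega>. G (Y \<omega>) \<partial>M) \<partial>M)" .
  qed (use assms(4) in auto)
qed



lemma det:
  assumes "general_arrival F f"
  obtains f0 K \<delta> where "f0 > 0" "K \<ge> 0" "\<delta> > 0"
    "\<And>x y. 0 \<le> x \<Longrightarrow> 0 \<le> y \<Longrightarrow> \<bar>F (x + y) - F x - f x * y\<bar> \<le> f0 * y"
    "\<And>x y. 0 \<le> x \<Longrightarrow> x \<le> \<delta> \<Longrightarrow> 0 \<le> y \<Longrightarrow> \<bar>F (x + y) - F x - f x * y\<bar> \<le> K * y\<^sup>2"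
proof -
  from assms have fpos: "\<And>x. x \<ge> 0 \<Longrightarrow> f x > 0" and fc: "continuous_on {0..} f"
    and Fdef: "\<And>x. F x = (if x < 0 then 0 else integral {0..x} f)"
    and A4: "\<exists>\<delta>>0. \<exists>f'. (\<forall>x\<in>{0..<\<delta>}. (f has_real_derivative f' x) (at x within {0..}))
                  \<and> continuous_on {0..<\<delta>} f'"
    and fle: "\<And>x. x \<ge> 0 \<Longrightarrow> f x \<le> f 0"
    unfolding general_arrival_def by auto
  define f0 where "f0 = f 0"
  have f0pos: "f0 > 0" using fpos[of 0] by (simp add: f0_def)
  have fint: "f integrable_on {a..b}" if "0 \<le> a" for a b
    by (rule integrable_continuous_interval) (rule continuous_on_subset[OF fc], use that in auto)
  have Fdiff: "F (x + y) - F x = integral {x..x+y} f" if "0 \<le> x" "0 \<le> y" for x y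
  proof -
    have "integral {0..x} f + integral {x..x+y} f = integral {0..x+y} f"
      by (rule Henstock_Kurzweil_Integration.integral_combine) (use that fint in auto)
    then show ?thesis using that by (simp add: Fdef)
  qed
  have intbnd: "c * y \<le> integral {x..x+y} f \<and> integral {x..x+y} f \<le> d * y"
    if "0 \<le> x" "0 \<le> y" "\<And>s. s \<in> {x..x+y} \<Longrightarrow> c \<le> f s \<and> f s \<le> d" for x y c d
  proof
    have "integral {x..x+y} (\<lambda>_. c) \<le> integral {x..x+y} f"
      by (rule integral_le) (use that fint in auto)
    then show "c * y \<le> integral {x..x+y} f" using that by (simp add: mult.commute)
    have "integral {x..x+y} f \<le> integral {x..x+y} (\<lambda>_. d)"
      by (rule integral_le) (use that fint in auto)
    then show "integral {x..x+y} f \<le> d * y" using that by (simp add: mult.commute)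
  qed
  have B1: "\<bar>F (x + y) - F x - f x * y\<bar> \<le> f0 * y" if "0 \<le> x" "0 \<le> y" for x y
  proof -
    have "0 * y \<le> integral {x..x+y} f \<and> integral {x..x+y} f \<le> f0 * y"
      by (rule intbnd) (use that fpos fle in \<open>auto simp: f0_def less_imp_le\<close>)
    moreover have "0 \<le> f x * y" "f x * y \<le> f0 * y"
      using that fpos[of x] fle[of x] by (auto simp: f0_def mult_right_mono)
    ultimately show ?thesis using Fdiff[OF that] by auto
  qed
  from A4 obtain \<delta> f' where dpos: "\<delta> > 0"
    and fd: "\<And>x. x \<in> {0..<\<delta>} \<Longrightarrow> (f has_real_derivative f' x) (at x within {0..})"
    and f'c: "continuous_on {0..<\<delta>} f'" by blast
  define \<delta>1 where "\<delta>1 = \<delta> / 2"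
  have d1: "\<delta>1 > 0" "\<delta>1 < \<delta>" using dpos by (auto simp: \<delta>1_def)
  have "continuous_on {0..\<delta>1} f'"
    by (rule continuous_on_subset[OF f'c]) (use d1 in auto)
  then obtain B where B: "B \<ge> 0" "\<And>x. x \<in> {0..\<delta>1} \<Longrightarrow> norm (f' x) \<le> B"
    by (rule continuous_on_compact_bound[rotated]) auto
  have lip: "\<bar>f s - f x\<bar> \<le> B * \<bar>s - x\<bar>" if "s \<in> {0..\<delta>1}" "x \<in> {0..\<delta>1}" for s x
  proof -
    have "norm (f s - f x) \<le> B * norm (s - x)"
    proof (rule field_differentiable_bound[of "{0..\<delta>1}" f f'])
      fix z assume z: "z \<in> {0..\<delta>1}"
      then have "z \<in> {0..<\<delta>}" using d1 by auto
      from fd[OF this] show "(f has_field_derivative f' z) (at z within {0..\<delta>1})"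
        by (rule DERIV_subset) auto
    qed (use B that in auto)
    then show ?thesis by simp
  qed
  define \<delta>2 where "\<delta>2 = \<delta>1 / 2"
  define K where "K = B + f0 / \<delta>2"
  have d2: "\<delta>2 > 0" using d1 by (simp add: \<delta>2_def)
  have K0: "K \<ge> 0" using B d2 f0pos by (simp add: K_def)
  have B2: "\<bar>F (x + y) - F x - f x * y\<bar> \<le> K * y\<^sup>2" if "0 \<le> x" "x \<le> \<delta>2" "0 \<le> y" for x y
  proof (cases "x + y \<le> \<delta>1")
    case True
    have "(f x - B * y) * y \<le> integral {x..x+y} f \<and> integral {x..x+y} f \<le> (f x + B * y) * y"
    proof (rule intbnd)
      fix s assume s: "s \<in> {x..x+y}"
      have "\<bar>f s - f x\<bar> \<le> B * \<bar>s - x\<bar>" by (rule lip) (use s that True d2 \<delta>2_def in auto)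
      also have "\<dots> \<le> B * y" using s B by (intro mult_left_mono) auto
      finally show "f x - B * y \<le> f s \<and> f s \<le> f x + B * y" by auto
    qed (use that in auto)
    then have "\<bar>F (x + y) - F x - f x * y\<bar> \<le> B * y\<^sup>2"
      using Fdiff[OF that(1,3)] by (auto simp: algebra_simps power2_eq_square)
    also have "\<dots> \<le> K * y\<^sup>2" using d2 f0pos by (auto simp: K_def intro!: mult_right_mono)
    finally show ?thesis .
  next
    case False
    then have y: "y \<ge> \<delta>2" using that by (simp add: \<delta>2_def)
    have "\<bar>F (x + y) - F x - f x * y\<bar> \<le> f0 * y" by (rule B1) (use that in auto)
    also have "\<dots> \<le> f0 * y * (y / \<delta>2)"
      using y d2 f0pos that by (auto simp: field_simps intro!: mult_left_mono)
    also have "\<dots> = (f0 / \<delta>2) * y\<^sup>2" by (simp add: power2_eq_square)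
    also have "\<dots> \<le> K * y\<^sup>2" unfolding K_def by (rule mult_right_mono) (use B in auto)
    finally show ?thesis .
  qed
  show ?thesis by (rule that[OF f0pos K0 d2 B1 B2])
qed



lemma Dn_eq: "Dn \<beta> S n j \<omega> = S j \<omega> * ((1 + \<beta> * real n powr (-1/3)) / real n)"
  by (simp add: Dn_def)

lemma Sigman_eq: "Sigman \<beta> S n k \<omega> = ((1 + \<beta> * real n powr (-1/3)) / real n) * (\<Sum>j\<in>{1..k}. S j \<omega>)"
  unfolding Sigman_def Dn_eq by (subst sum_distrib_right[symmetric]) (rule mult.commute)

lemma cn_lim: "(\<lambda>n::nat. real n powr (2/3) * ((1 + \<beta> * real n powr (-1/3)) / real n)) \<longlonglongrightarrow> 0"
  by real_asymp

lemma cn_ev: "eventually (\<lambda>n::nat. 0 \<le> (1 + \<beta> * real n powr (-1/3)) / real n) sequentially"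
proof -
  have "(\<lambda>n::nat. 1 + \<beta> * real n powr (-1/3)) \<longlonglongrightarrow> 1" by real_asymp
  then have "eventually (\<lambda>n::nat. 1 + \<beta> * real n powr (-1/3) > 0) sequentially"
    by (rule order_tendstoD) simp
  then show ?thesis by eventually_elim simp
qed

lemma generic:
  fixes M :: "'a measure" and S :: "nat \<Rightarrow> 'a \<Rightarrow> real" and \<beta> t \<delta> :: real
    and h :: "nat \<Rightarrow> nat \<Rightarrow> 'a \<Rightarrow> real" and G :: "nat \<Rightarrow> real \<Rightarrow> real" and a :: "nat \<Rightarrow> real"
  assumes P: "prob_space M"
    and Sm: "\<And>i. i \<ge> 1 \<Longrightarrow> S i \<in> borel_measurable M"
    and ind: "prob_space.indep_vars M (\<lambda>_. borel) S {1..}"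
    and Sd: "\<And>i. i \<ge> 1 \<Longrightarrow> distr M borel (S i) = distr M borel (S 1)"
    and Sp: "\<And>i. i \<ge> 1 \<Longrightarrow> AE \<omega> in M. S i \<omega> \<ge> 0"
    and S1i: "integrable M (S 1)"
    and dpos: "\<delta> > 0"
    and hpos: "\<And>n k x. h n k x \<ge> 0"
    and hyp: "eventually (\<lambda>n. \<forall>k\<ge>1. (\<exists>H. integrable M H \<and> (AE x in M. h n k x \<le> H x)) \<and>
          (AE x in M. Sigman \<beta> S n (k - 1) x \<le> \<delta> \<longrightarrow> h n k x \<le> G n (S k x))) sequentially"
    and Gm: "\<And>n. G n \<in> borel_measurable borel"
    and Gi: "\<And>n. integrable M (\<lambda>x. G n (S 1 x))"
    and Gp: "\<And>n s. s \<ge> 0 \<Longrightarrow> G n s \<ge> 0"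
    and lim: "(\<lambda>n. a n * (\<integral>x. G n (S 1 x) \<partial>M)) \<longlonglongrightarrow> 0"
    and ap: "\<And>n. a n \<ge> 0"
  shows "sup_to_zero_in_prob M t (\<lambda>n k \<omega>. a n * cond_exp_given M (Sigman \<beta> S n (k - 1)) (h n k) \<omega>)"
  unfolding sup_to_zero_in_prob_def
proof (intro allI impI)
  interpret prob_space M by fact
  fix \<epsilon> :: real assume eps: "\<epsilon> > 0"
  define c where "c n = (1 + \<beta> * real n powr (-1/3)) / real n" for n :: nat
  define Kn where "Kn n = nat \<lfloor>t * real n powr (2/3)\<rfloor>" for n :: nat
  define Set where "Set n = {\<omega> \<in> space M. \<exists>k. 1 \<le> k \<and> real k \<le> t * real n powr (2 / 3) \<and>
     \<bar>a n * cond_exp_given M (Sigman \<beta> S n (k - 1)) (h n k) \<omega>\<bar> > \<epsilon>}" for n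
  define w where "w n = c n * (real n powr (2/3) * \<bar>t\<bar> * (\<integral>x. S 1 x \<partial>M)) / \<delta>" for n
  have Sigm: "Sigman \<beta> S n k \<in> borel_measurable M" for n k
    unfolding Sigman_eq using Sm by (auto intro!: borel_measurable_sum borel_measurable_times)
  have distint: "(\<integral>x. g (S k x) \<partial>M) = (\<integral>x. g (S 1 x) \<partial>M)
      \<and> (integrable M (\<lambda>x. g (S k x)) \<longleftrightarrow> integrable M (\<lambda>x. g (S 1 x)))"
    if "k \<ge> 1" "g \<in> borel_measurable borel" for k and g :: "real \<Rightarrow> real"
  proof -
    have m1: "S k \<in> M \<rightarrow>\<^sub>M borel" "S 1 \<in> M \<rightarrow>\<^sub>M borel" using Sm that by auto
    show ?thesis
      using integral_distr[OF m1(1) that(2)] integral_distr[OF m1(2) that(2)]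
        integrable_distr_eq[OF m1(1) that(2)] integrable_distr_eq[OF m1(2) that(2)] Sd[OF that(1)]
      by simp
  qed
  have ES1: "(\<integral>x. S 1 x \<partial>M) \<ge> 0"
    using Sp[of 1] by (intro integral_nonneg_AE) auto
  have indk: "indep_var borel (Sigman \<beta> S n (k - 1)) borel (S k)" if "k \<ge> 1" for n k
  proof -
    have ind2: "indep_vars (\<lambda>_. borel) S ({1..k-1} \<union> {k})"
      by (rule indep_vars_subset[OF ind]) (use that in auto)
    have "indep_var borel ((\<lambda>f. c n * (\<Sum>i\<in>{1..k-1}. f i)) \<circ> (\<lambda>\<omega>. restrict (\<lambda>i. S i \<omega>) {1..k-1}))
                     borel ((\<lambda>f. f k) \<circ> (\<lambda>\<omega>. restrict (\<lambda>i. S i \<omega>) {k}))"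
      by (intro indep_var_compose[OF indep_var_restrict[OF ind2]]) auto
    also have "((\<lambda>f. c n * (\<Sum>i\<in>{1..k-1}. f i)) \<circ> (\<lambda>\<omega>. restrict (\<lambda>i. S i \<omega>) {1..k-1}))
        = Sigman \<beta> S n (k - 1)"
    proof -
      have "(\<Sum>i\<in>{1..k-1}. restrict (\<lambda>i. S i \<omega>) {1..k-1} i) = (\<Sum>i\<in>{1..k-1}. S i \<omega>)" for \<omega>
        by (rule sum.cong) auto
      then show ?thesis by (auto simp: fun_eq_iff Sigman_eq c_def)
    qed
    also have "((\<lambda>f. f k) \<circ> (\<lambda>\<omega>. restrict (\<lambda>i. S i \<omega>) {k})) = S k" by auto
    finally show ?thesis .
  qed
  have good: "measure M (Set n) \<le> w n"
    if hn: "\<forall>k\<ge>1. (\<exists>H. integrable M H \<and> (AE x in M. h n k x \<le> H x)) \<and>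
          (AE x in M. Sigman \<beta> S n (k - 1) x \<le> \<delta> \<longrightarrow> h n k x \<le> G n (S k x))"
      and an: "a n * (\<integral>x. G n (S 1 x) \<partial>M) < \<epsilon>" and cn: "c n \<ge> 0" for n
  proof -
    have AEk: "AE \<omega> in M. 0 \<le> cond_exp_given M (Sigman \<beta> S n (k - 1)) (h n k) \<omega> \<and>
        (Sigman \<beta> S n (k - 1) \<omega> \<le> \<delta> \<longrightarrow> cond_exp_given M (Sigman \<beta> S n (k - 1)) (h n k) \<omega>
           \<le> (\<integral>x. G n (S 1 x) \<partial>M))" if k: "k \<ge> 1" for k
    proof -
      let ?F = "vimage_algebra (space M) (Sigman \<beta> S n (k - 1)) borel"
      have sfs: "sigma_finite_subalgebra M ?F" by (rule sfs_vimage[OF P Sigm])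
      from hn k obtain H where H: "integrable M H" "AE x in M. h n k x \<le> H x" by blast
      have A: "{x \<in> space M. Sigman \<beta> S n (k - 1) x \<le> \<delta>} \<in> sets ?F"
      proof -
        have "{x \<in> space M. Sigman \<beta> S n (k - 1) x \<le> \<delta>} = Sigman \<beta> S n (k - 1) -` {..\<delta>} \<inter> space M" by auto
        moreover have "{..\<delta>} \<in> sets (borel :: real measure)" by simp
        ultimately show ?thesis by (subst sets_vimage_algebra2) (simp, blast)
      qed
      have gi: "integrable M (\<lambda>x. G n (S k x))" using distint[OF k Gm] Gi by auto
      have l1: "AE x in M. 0 \<le> real_cond_exp M ?F (h n k) x \<and>
          (x \<in> {x \<in> space M. Sigman \<beta> S n (k - 1) x \<le> \<delta>} \<longrightarrow>
             real_cond_exp M ?F (h n k) x \<le> real_cond_exp M ?F (\<lambda>x. G n (S k x)) x)"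
      proof (rule CE_loc[OF sfs hpos A H gi])
        show "AE x in M. x \<in> {x \<in> space M. Sigman \<beta> S n (k - 1) x \<le> \<delta>} \<longrightarrow> h n k x \<le> G n (S k x)"
          using hn k by auto
        show "AE x in M. 0 \<le> G n (S k x)" using Sp[OF k] by eventually_elim (rule Gp)
      qed
      have l2: "AE x in M. real_cond_exp M ?F (\<lambda>x. G n (S k x)) x = (\<integral>x. G n (S k x) \<partial>M)"
        by (rule CE_indep[OF P indk[OF k] Gm gi])
      have l3: "(\<integral>x. G n (S k x) \<partial>M) = (\<integral>x. G n (S 1 x) \<partial>M)" using distint[OF k Gm] by auto
      show ?thesis using l1 l2 AE_space unfolding cond_exp_given_def l3 by eventually_elim auto
    qed
    have AEall: "AE \<omega> in M. (\<forall>k\<in>{1..Kn n}. 0 \<le> cond_exp_given M (Sigman \<beta> S n (k - 1)) (h n k) \<omega> \<and>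
        (Sigman \<beta> S n (k - 1) \<omega> \<le> \<delta> \<longrightarrow> cond_exp_given M (Sigman \<beta> S n (k - 1)) (h n k) \<omega>
           \<le> (\<integral>x. G n (S 1 x) \<partial>M))) \<and> (\<forall>j\<in>{1..Kn n}. S j \<omega> \<ge> 0)"
      using AE_finite_allI[of "{1..Kn n}", OF _ AEk] AE_finite_allI[of "{1..Kn n}", OF _ Sp] by auto
    then obtain N where N: "{x \<in> space M. \<not> ((\<forall>k\<in>{1..Kn n}. 0 \<le> cond_exp_given M (Sigman \<beta> S n (k - 1)) (h n k) x \<and>
        (Sigman \<beta> S n (k - 1) x \<le> \<delta> \<longrightarrow> cond_exp_given M (Sigman \<beta> S n (k - 1)) (h n k) x
           \<le> (\<integral>x. G n (S 1 x) \<partial>M))) \<and> (\<forall>j\<in>{1..Kn n}. S j x \<ge> 0))} \<subseteq> N"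
      "emeasure M N = 0" "N \<in> sets M" by (rule AE_E)
    define B where "B = {\<omega> \<in> space M. Sigman \<beta> S n (Kn n) \<omega> \<ge> \<delta>}"
    have Bm: "B \<in> sets M" unfolding B_def using Sigm by measurable
    have sub: "Set n \<subseteq> B \<union> N"
    proof
      fix \<omega> assume om: "\<omega> \<in> Set n"
      show "\<omega> \<in> B \<union> N"
      proof (rule ccontr)
        assume nin: "\<omega> \<notin> B \<union> N"
        from om obtain k where k: "1 \<le> k" "real k \<le> t * real n powr (2 / 3)"
          "\<bar>a n * cond_exp_given M (Sigman \<beta> S n (k - 1)) (h n k) \<omega>\<bar> > \<epsilon>" and osp: "\<omega> \<in> space M"
          unfolding Set_def by auto
        have kK: "k \<le> Kn n" unfolding Kn_def using k(2) by linarith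
        from nin osp N(1) have Pw: "(\<forall>k\<in>{1..Kn n}. 0 \<le> cond_exp_given M (Sigman \<beta> S n (k - 1)) (h n k) \<omega> \<and>
          (Sigman \<beta> S n (k - 1) \<omega> \<le> \<delta> \<longrightarrow> cond_exp_given M (Sigman \<beta> S n (k - 1)) (h n k) \<omega>
           \<le> (\<integral>x. G n (S 1 x) \<partial>M))) \<and> (\<forall>j\<in>{1..Kn n}. S j \<omega> \<ge> 0)" by blast
        have le: "Sigman \<beta> S n (k - 1) \<omega> \<le> Sigman \<beta> S n (Kn n) \<omega>"
          unfolding Sigman_eq
          by (intro mult_left_mono sum_mono2) (use Pw kK cn in \<open>auto simp: c_def\<close>)
        have "Sigman \<beta> S n (Kn n) \<omega> < \<delta>" using nin osp unfolding B_def by auto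
        with le have "Sigman \<beta> S n (k - 1) \<omega> \<le> \<delta>" by simp
        with Pw k(1) kK have ce: "0 \<le> cond_exp_given M (Sigman \<beta> S n (k - 1)) (h n k) \<omega>"
          "cond_exp_given M (Sigman \<beta> S n (k - 1)) (h n k) \<omega> \<le> (\<integral>x. G n (S 1 x) \<partial>M)" by auto
        have "\<bar>a n * cond_exp_given M (Sigman \<beta> S n (k - 1)) (h n k) \<omega>\<bar>
            = a n * cond_exp_given M (Sigman \<beta> S n (k - 1)) (h n k) \<omega>" using ce ap[of n] by simp
        also have "\<dots> \<le> a n * (\<integral>x. G n (S 1 x) \<partial>M)" using ce ap[of n] by (intro mult_left_mono) auto
        finally show False using k(3) an by simp
      qed
    qed
    have mB: "measure M (Set n) \<le> measure M B"
    proof (cases "Set n \<in> sets M")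
      case True
      have "measure M (Set n) \<le> measure M (B \<union> N)" by (rule finite_measure_mono[OF sub]) (use Bm N in auto)
      also have "\<dots> \<le> measure M B + measure M N" by (rule measure_Un_le) (use Bm N in auto)
      also have "measure M N = 0" using N by (simp add: measure_def)
      finally show ?thesis by simp
    next
      case False then show ?thesis by (simp add: measure_notin_sets)
    qed
    have Sint: "integrable M (Sigman \<beta> S n (Kn n))"
    proof -
      have "integrable M (S j)" if "j \<in> {1..Kn n}" for j
        using distint[of j "\<lambda>x. x"] that S1i by auto
      then have "integrable M (\<lambda>\<omega>. \<Sum>j\<in>{1..Kn n}. S j \<omega>)"
        by (intro Bochner_Integration.integrable_sum) auto
      then show ?thesis unfolding Sigman_eq by (rule integrable_mult_right)
    qed
    have ES: "(\<integral>x. Sigman \<beta> S n (Kn n) x \<partial>M) = c n * (real (Kn n) * (\<integral>x. S 1 x \<partial>M))"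
    proof -
      have Ij: "integrable M (S j)" "(\<integral>x. S j x \<partial>M) = (\<integral>x. S 1 x \<partial>M)" if "j \<in> {1..Kn n}" for j
        using distint[of j "\<lambda>x. x"] that S1i by auto
      have e1: "(\<integral>x. (\<Sum>j\<in>{1..Kn n}. S j x) \<partial>M) = (\<Sum>j\<in>{1..Kn n}. \<integral>x. S j x \<partial>M)"
        by (rule Bochner_Integration.integral_sum) (rule Ij(1))
      have e2: "(\<Sum>j\<in>{1..Kn n}. \<integral>x. S j x \<partial>M) = (\<Sum>j\<in>{1..Kn n}. \<integral>x. S 1 x \<partial>M)"
        by (rule sum.cong) (rule refl, rule Ij(2))
      have e3: "(\<integral>x. Sigman \<beta> S n (Kn n) x \<partial>M) = c n * (\<integral>x. (\<Sum>j\<in>{1..Kn n}. S j x) \<partial>M)"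
        unfolding Sigman_eq c_def[symmetric] by (rule integral_mult_right_zero)
      show ?thesis unfolding e3 e1 e2 by simp
    qed
    have Spos: "AE x in M. 0 \<le> Sigman \<beta> S n (Kn n) x"
    proof -
      have "AE x in M. \<forall>j\<in>{1..Kn n}. 0 \<le> S j x" by (rule AE_finite_allI) (use Sp in auto)
      then show ?thesis
      proof eventually_elim
        case (elim x)
        then have "0 \<le> (\<Sum>j\<in>{1..Kn n}. S j x)" by (intro sum_nonneg) auto
        then show ?case unfolding Sigman_eq c_def[symmetric] using cn by simp
      qed
    qed
    have "measure M B \<le> (\<integral>x. Sigman \<beta> S n (Kn n) x \<partial>M) / \<delta>"
      unfolding B_def by (rule integral_Markov_inequality_measure[OF Sint sets.top Spos dpos])
    also have "\<dots> \<le> w n"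
    proof -
      have fl: "real (nat \<lfloor>x\<rfloor>) \<le> max 0 x" for x :: real by (cases "x \<ge> 0") auto
      have tp: "t * real n powr (2/3) \<le> real n powr (2/3) * \<bar>t\<bar>"
        by (subst mult.commute) (rule mult_left_mono, auto)
      have "max 0 (t * real n powr (2/3)) \<le> real n powr (2/3) * \<bar>t\<bar>"
        by (rule max.boundedI) (simp_all add: tp)
      then have "real (Kn n) \<le> real n powr (2/3) * \<bar>t\<bar>" unfolding Kn_def
        using fl[of "t * real n powr (2/3)"] by linarith
      then have "c n * (real (Kn n) * (\<integral>x. S 1 x \<partial>M)) \<le> c n * (real n powr (2/3) * \<bar>t\<bar> * (\<integral>x. S 1 x \<partial>M))"
        using cn ES1 by (intro mult_left_mono mult_right_mono) auto
      then show ?thesis unfolding ES w_def by (rule divide_right_mono) (use dpos in simp)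
    qed
    finally show ?thesis using mB by simp
  qed
  have ev: "eventually (\<lambda>n. measure M (Set n) \<le> w n) sequentially"
  proof -
    have e2: "eventually (\<lambda>n. a n * (\<integral>x. G n (S 1 x) \<partial>M) < \<epsilon>) sequentially"
      using lim eps by (rule order_tendstoD)
    have e3: "eventually (\<lambda>n. c n \<ge> 0) sequentially" using cn_ev[of \<beta>] by (simp add: c_def)
    from hyp e2 e3 show ?thesis by eventually_elim (rule good)
  qed
  have wlim: "w \<longlonglongrightarrow> 0"
  proof -
    have "(\<lambda>n. real n powr (2/3) * c n * (\<bar>t\<bar> * (\<integral>x. S 1 x \<partial>M) / \<delta>)) \<longlonglongrightarrow> 0 * (\<bar>t\<bar> * (\<integral>x. S 1 x \<partial>M) / \<delta>)"
      by (rule tendsto_mult[OF _ tendsto_const]) (use cn_lim[of \<beta>] in \<open>simp add: c_def\<close>)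
    moreover have "w = (\<lambda>n. real n powr (2/3) * c n * (\<bar>t\<bar> * (\<integral>x. S 1 x \<partial>M) / \<delta>))"
      by (rule ext) (simp add: w_def)
    ultimately show ?thesis by simp
  qed
  show "(\<lambda>n. measure M {\<omega> \<in> space M. \<exists>k. 1 \<le> k \<and> real k \<le> t * real n powr (2 / 3) \<and>
      \<bar>a n * cond_exp_given M (Sigman \<beta> S n (k - 1)) (h n k) \<omega>\<bar> > \<epsilon>}) \<longlonglongrightarrow> 0"
    unfolding Set_def[symmetric]
    by (rule tendsto_sandwich[OF _ ev tendsto_const wlim]) auto
qed



lemma minlim:
  fixes X :: "'a \<Rightarrow> real"
  assumes "X \<in> borel_measurable M" "integrable M (\<lambda>x. (X x)\<^sup>2)" "AE x in M. X x \<ge> 0"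
  shows "(\<lambda>n. \<integral>x. min ((X x)\<^sup>2) ((X x)^3 / real n) \<partial>M) \<longlonglongrightarrow> 0"
proof -
  have "(\<lambda>n. \<integral>x. min ((X x)\<^sup>2) ((X x)^3 / real n) \<partial>M) \<longlonglongrightarrow> (\<integral>x. 0 \<partial>M)"
  proof (rule integral_dominated_convergence[where w="\<lambda>x. (X x)\<^sup>2"])
    show "(\<lambda>x. 0::real) \<in> borel_measurable M" by simp
    show "(\<lambda>x. min ((X x)\<^sup>2) ((X x)^3 / real n)) \<in> borel_measurable M" for n
      using assms(1) by measurable
    show "integrable M (\<lambda>x. (X x)\<^sup>2)" by fact
    show "AE x in M. (\<lambda>n. min ((X x)\<^sup>2) ((X x)^3 / real n)) \<longlonglongrightarrow> 0"
    proof (rule AE_I2)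
      fix x
      have "(\<lambda>n. (X x)^3 / real n) \<longlonglongrightarrow> 0" by (rule lim_const_over_n)
      then have "(\<lambda>n. min ((X x)\<^sup>2) ((X x)^3 / real n)) \<longlonglongrightarrow> min ((X x)\<^sup>2) 0"
        by (intro tendsto_min tendsto_const)
      then show "(\<lambda>n. min ((X x)\<^sup>2) ((X x)^3 / real n)) \<longlonglongrightarrow> 0" by simp
    qed
    show "AE x in M. norm (min ((X x)\<^sup>2) ((X x)^3 / real n)) \<le> (X x)\<^sup>2" for n
      using assms(3) by eventually_elim auto
  qed
  then show ?thesis by simp
qed

lemma L2:
  fixes s c r f0 K :: real and n :: nat
  assumes "0 \<le> s" "0 < n" "0 \<le> c" "real n * c \<le> 2" "0 \<le> r" "r \<le> f0 * (s * c)" "r \<le> K * (s * c)\<^sup>2"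
    "0 \<le> f0" "0 \<le> K"
  shows "(s * c) * r \<le> (4 * f0 + 8 * K) * min (s\<^sup>2) (s^3 / real n) / (real n)\<^sup>2"
proof -
  have n0: "real n > 0" using assms(2) by simp
  have c2: "c \<le> 2 / real n" using assms(4) n0 by (simp add: field_simps)
  have sc: "s * c \<le> 2 * s / real n"
  proof -
    have "s * c \<le> s * (2 / real n)" using c2 assms(1) by (rule mult_left_mono)
    then show ?thesis by (simp add: mult.commute)
  qed
  have sc0: "0 \<le> s * c" using assms by simp
  show ?thesis
  proof (cases "s \<le> real n")
    case True
    have m: "min (s\<^sup>2) (s^3 / real n) = s^3 / real n"
    proof -
      have "s^3 / real n = s\<^sup>2 * (s / real n)" by (simp add: power2_eq_square power3_eq_cube)
      also have "\<dots> \<le> s\<^sup>2 * 1" using True n0 assms(1) by (intro mult_left_mono) auto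
      finally show ?thesis by simp
    qed
    have "(s * c) * r \<le> (s * c) * (K * (s * c)\<^sup>2)" using assms sc0 by (intro mult_left_mono) auto
    also have "\<dots> = K * (s * c)^3" by (simp add: power2_eq_square power3_eq_cube)
    also have "\<dots> \<le> K * (2 * s / real n)^3" using sc sc0 assms(9) by (intro mult_left_mono power_mono) auto
    also have "\<dots> = 8 * K * (s^3 / real n) / (real n)\<^sup>2" using n0
      by (simp add: power2_eq_square power3_eq_cube field_simps)
    also have "\<dots> \<le> (4 * f0 + 8 * K) * (s^3 / real n) / (real n)\<^sup>2"
      using assms(1,8) n0 by (intro divide_right_mono mult_right_mono) auto
    finally show ?thesis using m by simp
  next
    case False
    have m: "min (s\<^sup>2) (s^3 / real n) = s\<^sup>2"
    proof -
      have "s\<^sup>2 * 1 \<le> s\<^sup>2 * (s / real n)" using False n0 assms(1) by (intro mult_left_mono) auto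
      also have "\<dots> = s^3 / real n" by (simp add: power2_eq_square power3_eq_cube)
      finally show ?thesis by simp
    qed
    have "(s * c) * r \<le> (s * c) * (f0 * (s * c))" using assms sc0 by (intro mult_left_mono) auto
    also have "\<dots> = f0 * (s * c)\<^sup>2" by (simp add: power2_eq_square)
    also have "\<dots> \<le> f0 * (2 * s / real n)\<^sup>2" using sc sc0 assms(8) by (intro mult_left_mono power_mono) auto
    also have "\<dots> = 4 * f0 * s\<^sup>2 / (real n)\<^sup>2" using n0 by (simp add: power2_eq_square field_simps)
    also have "\<dots> \<le> (4 * f0 + 8 * K) * s\<^sup>2 / (real n)\<^sup>2"
      using assms(9) n0 by (intro divide_right_mono mult_right_mono) auto
    finally show ?thesis using m by simp
  qed
qed

lemma L3:
  fixes s c r f0 K :: real and n :: nat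
  assumes "0 \<le> s" "0 < n" "0 \<le> c" "real n * c \<le> 2" "0 \<le> r" "r \<le> f0 * (s * c)" "r \<le> K * (s * c)\<^sup>2"
    "0 \<le> f0" "0 \<le> K"
  shows "r\<^sup>2 \<le> (4 * f0\<^sup>2 + 16 * K\<^sup>2) * min (s\<^sup>2) (s^3 / real n) / (real n)\<^sup>2"
proof -
  have n0: "real n > 0" using assms(2) by simp
  have c2: "c \<le> 2 / real n" using assms(4) n0 by (simp add: field_simps)
  have sc: "s * c \<le> 2 * s / real n"
  proof -
    have "s * c \<le> s * (2 / real n)" using c2 assms(1) by (rule mult_left_mono)
    then show ?thesis by (simp add: mult.commute)
  qed
  have sc0: "0 \<le> s * c" using assms by simp
  show ?thesis
  proof (cases "s \<le> real n")
    case True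
    have m: "min (s\<^sup>2) (s^3 / real n) = s^3 / real n"
    proof -
      have "s^3 / real n = s\<^sup>2 * (s / real n)" by (simp add: power2_eq_square power3_eq_cube)
      also have "\<dots> \<le> s\<^sup>2 * 1" using True n0 assms(1) by (intro mult_left_mono) auto
      finally show ?thesis by simp
    qed
    have "r\<^sup>2 \<le> (K * (s * c)\<^sup>2)\<^sup>2" using assms by (intro power_mono) auto
    also have "\<dots> = K\<^sup>2 * (s * c)^4" by (simp add: power2_eq_square power4_eq_xxxx)
    also have "\<dots> \<le> K\<^sup>2 * (2 * s / real n)^4" using sc sc0 by (intro mult_left_mono power_mono) auto
    also have "\<dots> = 16 * K\<^sup>2 * (s^3 / real n) * (s / real n) / (real n)\<^sup>2" using n0
      by (simp add: power2_eq_square power3_eq_cube power4_eq_xxxx field_simps)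
    also have "\<dots> \<le> 16 * K\<^sup>2 * (s^3 / real n) * 1 / (real n)\<^sup>2"
      using True n0 assms(1) by (intro divide_right_mono mult_left_mono) auto
    also have "\<dots> = 16 * K\<^sup>2 * (s^3 / real n) / (real n)\<^sup>2" by simp
    also have "\<dots> \<le> (4 * f0\<^sup>2 + 16 * K\<^sup>2) * (s^3 / real n) / (real n)\<^sup>2"
    proof (rule divide_right_mono[OF mult_right_mono])
      show "0 \<le> s^3 / real n" using assms(1) n0 by simp
    qed auto
    finally show ?thesis using m by simp
  next
    case False
    have m: "min (s\<^sup>2) (s^3 / real n) = s\<^sup>2"
    proof -
      have "s\<^sup>2 * 1 \<le> s\<^sup>2 * (s / real n)" using False n0 assms(1) by (intro mult_left_mono) auto
      also have "\<dots> = s^3 / real n" by (simp add: power2_eq_square power3_eq_cube)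
      finally show ?thesis by simp
    qed
    have "r\<^sup>2 \<le> (f0 * (s * c))\<^sup>2" using assms by (intro power_mono) auto
    also have "\<dots> = f0\<^sup>2 * (s * c)\<^sup>2" by (simp add: power_mult_distrib)
    also have "\<dots> \<le> f0\<^sup>2 * (2 * s / real n)\<^sup>2" using sc sc0 by (intro mult_left_mono power_mono) auto
    also have "\<dots> = 4 * f0\<^sup>2 * s\<^sup>2 / (real n)\<^sup>2" using n0 by (simp add: power2_eq_square field_simps)
    also have "\<dots> \<le> (4 * f0\<^sup>2 + 16 * K\<^sup>2) * s\<^sup>2 / (real n)\<^sup>2"
      using n0 by (intro divide_right_mono mult_right_mono) auto
    finally show ?thesis using m by simp
  qed
qed



lemma dist_same:
  fixes X Y :: "'a \<Rightarrow> real" and g :: "real \<Rightarrow> real"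
  assumes "X \<in> borel_measurable M" "Y \<in> borel_measurable M" "distr M borel X = distr M borel Y"
    "g \<in> borel_measurable borel"
  shows "integrable M (\<lambda>x. g (X x)) = integrable M (\<lambda>x. g (Y x))"
  using integrable_distr_eq[OF assms(1) assms(4)] integrable_distr_eq[OF assms(2) assms(4)] assms(3)
  by simp

lemma Gfacts:
  fixes C :: real and X :: "'a \<Rightarrow> real"
  assumes "C \<ge> 0" "X \<in> borel_measurable M" "integrable M (\<lambda>x. (X x)\<^sup>2)" "AE x in M. X x \<ge> 0"
  shows "(\<lambda>s. C * min (s\<^sup>2) (s^3 / real n) / (real n)\<^sup>2) \<in> borel_measurable borel"
    and "integrable M (\<lambda>x. C * min ((X x)\<^sup>2) ((X x)^3 / real n) / (real n)\<^sup>2)"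
    and "s \<ge> 0 \<Longrightarrow> C * min (s\<^sup>2) (s^3 / real n) / (real n)\<^sup>2 \<ge> 0"
    and "(\<lambda>n. real n powr 2 * (\<integral>x. C * min ((X x)\<^sup>2) ((X x)^3 / real n) / (real n)\<^sup>2 \<partial>M)) \<longlonglongrightarrow> 0"
proof -
  show "(\<lambda>s. C * min (s\<^sup>2) (s^3 / real n) / (real n)\<^sup>2) \<in> borel_measurable borel" by measurable
  have mi: "integrable M (\<lambda>x. min ((X x)\<^sup>2) ((X x)^3 / real n))" for n
  proof (rule Bochner_Integration.integrable_bound[OF assms(3)])
    show "(\<lambda>x. min ((X x)\<^sup>2) ((X x)^3 / real n)) \<in> borel_measurable M" using assms(2) by measurable
    show "AE x in M. norm (min ((X x)\<^sup>2) ((X x)^3 / real n)) \<le> norm ((X x)\<^sup>2)"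
      using assms(4) by eventually_elim auto
  qed
  show "integrable M (\<lambda>x. C * min ((X x)\<^sup>2) ((X x)^3 / real n) / (real n)\<^sup>2)"
    using mi[of n] by simp
  show "s \<ge> 0 \<Longrightarrow> C * min (s\<^sup>2) (s^3 / real n) / (real n)\<^sup>2 \<ge> 0" using assms(1) by simp
  have l: "(\<lambda>n. C * (\<integral>x. min ((X x)\<^sup>2) ((X x)^3 / real n) \<partial>M)) \<longlonglongrightarrow> C * 0"
    by (intro tendsto_mult tendsto_const minlim assms)
  have ev: "eventually (\<lambda>n. C * (\<integral>x. min ((X x)\<^sup>2) ((X x)^3 / real n) \<partial>M) =
      real n powr 2 * (\<integral>x. C * min ((X x)\<^sup>2) ((X x)^3 / real n) / (real n)\<^sup>2 \<partial>M)) sequentially"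
    using eventually_gt_at_top[of 0]
  proof eventually_elim
    case (elim n)
    have "(\<integral>x. C * min ((X x)\<^sup>2) ((X x)^3 / real n) / (real n)\<^sup>2 \<partial>M)
        = C * (\<integral>x. min ((X x)\<^sup>2) ((X x)^3 / real n) \<partial>M) / (real n)\<^sup>2"
      by simp
    then show ?case using elim by simp
  qed
  show "(\<lambda>n. real n powr 2 * (\<integral>x. C * min ((X x)\<^sup>2) ((X x)^3 / real n) / (real n)\<^sup>2 \<partial>M)) \<longlonglongrightarrow> 0"
    using Lim_transform_eventually[OF l ev] by simp
qed

lemma cn2_lim: "(\<lambda>n::nat. real n powr (4/3) * ((1 + \<beta> * real n powr (-1/3)) / real n)\<^sup>2) \<longlonglongrightarrow> 0"
  by real_asymp

lemma ncn_lim: "(\<lambda>n::nat. real n * ((1 + \<beta> * real n powr (-1/3)) / real n)) \<longlonglongrightarrow> 1"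
  by real_asymp

theorem mainTheorem12:
  fixes M :: "'a measure" and S :: "nat \<Rightarrow> 'a \<Rightarrow> real"
    and F f :: "real \<Rightarrow> real" and \<beta> t :: real
  assumes "prob_space M"
    and "general_arrival F f"
    and "\<And>i. i \<ge> 1 \<Longrightarrow> S i \<in> borel_measurable M"
    and "prob_space.indep_vars M (\<lambda>_. borel) S {1..}"
    and "\<And>i. i \<ge> 1 \<Longrightarrow> distr M borel (S i) = distr M borel (S 1)"
    and "\<And>i. i \<ge> 1 \<Longrightarrow> AE \<omega> in M. S i \<omega> \<ge> 0"
    and "integrable M (\<lambda>\<omega>. (S 1 \<omega>)\<^sup>2)"
    and "t > 0"
  shows
    "sup_to_zero_in_prob M t (\<lambda>n k \<omega>. real n powr (4/3) *
        cond_exp_given M (Sigman \<beta> S n (k - 1))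
          (\<lambda>x. \<bar>F (Sigman \<beta> S n k x) - F (Sigman \<beta> S n (k - 1) x)
                 - f (Sigman \<beta> S n (k - 1) x) * Dn \<beta> S n k x\<bar>) \<omega>)
     \<and> sup_to_zero_in_prob M t (\<lambda>n k \<omega>. real n powr 2 *
        cond_exp_given M (Sigman \<beta> S n (k - 1))
          (\<lambda>x. \<bar>Dn \<beta> S n k x * (F (Sigman \<beta> S n k x) - F (Sigman \<beta> S n (k - 1) x)
                 - f (Sigman \<beta> S n (k - 1) x) * Dn \<beta> S n k x)\<bar>) \<omega>)
     \<and> sup_to_zero_in_prob M t (\<lambda>n k \<omega>. real n powr 2 *
        cond_exp_given M (Sigman \<beta> S n (k - 1))
          (\<lambda>x. \<bar>F (Sigman \<beta> S n k x) - F (Sigman \<beta> S n (k - 1) x)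
                 - f (Sigman \<beta> S n (k - 1) x) * Dn \<beta> S n k x\<bar>\<^sup>2) \<omega>)"
proof -
  interpret prob_space M by fact
  obtain f0 K \<delta> where f0: "f0 > 0" and K0: "K \<ge> 0" and dpos: "\<delta> > 0"
    and B1: "\<And>x y. 0 \<le> x \<Longrightarrow> 0 \<le> y \<Longrightarrow> \<bar>F (x + y) - F x - f x * y\<bar> \<le> f0 * y"
    and B2: "\<And>x y. 0 \<le> x \<Longrightarrow> x \<le> \<delta> \<Longrightarrow> 0 \<le> y \<Longrightarrow> \<bar>F (x + y) - F x - f x * y\<bar> \<le> K * y\<^sup>2"
    using det[OF assms(2)] by blast
  have S1m: "S 1 \<in> borel_measurable M" using assms(3) by simp
  have S1i: "integrable M (S 1)" by (rule square_integrable_imp_integrable[OF S1m assms(7)])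
  have S1p: "AE x in M. S 1 x \<ge> 0" using assms(6) by simp
  define c where "c n = (1 + \<beta> * real n powr (-1/3)) / real n" for n :: nat
  define Rv where "Rv n k x = F (Sigman \<beta> S n k x) - F (Sigman \<beta> S n (k - 1) x)
                 - f (Sigman \<beta> S n (k - 1) x) * Dn \<beta> S n k x" for n k x
  have Dc: "Dn \<beta> S n k x = S k x * c n" for n k x by (simp add: Dn_eq c_def)
  have step: "Sigman \<beta> S n k x = Sigman \<beta> S n (k - 1) x + Dn \<beta> S n k x" if "k \<ge> 1" for n k x
  proof -
    have e: "{1..k} = insert k {1..k-1}" using that by auto
    have "(\<Sum>j\<in>insert k {1..k-1}. Dn \<beta> S n j x) = Dn \<beta> S n k x + (\<Sum>j\<in>{1..k-1}. Dn \<beta> S n j x)"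
      by (rule sum.insert) auto
    then show ?thesis unfolding Sigman_def e by (simp add: add.commute)
  qed
  have Ski: "integrable M (S k)" "integrable M (\<lambda>x. (S k x)\<^sup>2)" if "k \<ge> 1" for k
  proof -
    have m: "S k \<in> borel_measurable M" using assms(3) that by simp
    show "integrable M (S k)" using dist_same[OF m S1m assms(5)[OF that], of "\<lambda>x. x"] S1i by simp
    show "integrable M (\<lambda>x. (S k x)\<^sup>2)"
      using dist_same[OF m S1m assms(5)[OF that], of "\<lambda>x. x\<^sup>2"] assms(7) by simp
  qed
  have evc: "eventually (\<lambda>n. 0 < n \<and> 0 \<le> c n \<and> real n * c n \<le> 2) sequentially"
  proof -
    have e1: "eventually (\<lambda>n. real n * c n < 2) sequentially"
      using ncn_lim[of \<beta>] unfolding c_def[symmetric] by (rule order_tendstoD) simp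
    have e2: "eventually (\<lambda>n. 0 \<le> c n) sequentially" using cn_ev[of \<beta>] by (simp add: c_def)
    from e1 e2 eventually_gt_at_top[of 0] show ?thesis by eventually_elim auto
  qed
  have basic: "AE x in M. 0 \<le> Sigman \<beta> S n (k - 1) x \<and> 0 \<le> S k x" if "k \<ge> 1" "0 \<le> c n" for n k
  proof -
    have "AE x in M. \<forall>j\<in>{1..k}. 0 \<le> S j x" by (rule AE_finite_allI) (use assms(6) in auto)
    then show ?thesis
    proof eventually_elim
      case (elim x)
      then have "0 \<le> (\<Sum>j\<in>{1..k-1}. S j x)" by (intro sum_nonneg) auto
      then have "0 \<le> Sigman \<beta> S n (k - 1) x" unfolding Sigman_eq c_def[symmetric] using that by simp
      then show ?case using elim that by auto
    qed
  qed
  have RB: "\<bar>Rv n k x\<bar> \<le> f0 * (S k x * c n) \<and> (Sigman \<beta> S n (k - 1) x \<le> \<delta> \<longrightarrow> \<bar>Rv n k x\<bar> \<le> K * (S k x * c n)\<^sup>2)"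
    if "k \<ge> 1" "0 \<le> c n" "0 \<le> Sigman \<beta> S n (k - 1) x" "0 \<le> S k x" for n k x
  proof -
    have D0: "0 \<le> S k x * c n" using that by simp
    have R: "Rv n k x = F (Sigman \<beta> S n (k - 1) x + S k x * c n) - F (Sigman \<beta> S n (k - 1) x)
        - f (Sigman \<beta> S n (k - 1) x) * (S k x * c n)"
      unfolding Rv_def step[OF that(1)] Dc ..
    show ?thesis unfolding R using B1[OF that(3) D0] B2[OF that(3) _ D0] by auto
  qed
  have Sk1m: "S k \<in> borel_measurable M" if "k \<ge> 1" for k using assms(3) that by simp
  have c1: "sup_to_zero_in_prob M t (\<lambda>n k \<omega>. real n powr (4/3) *
        cond_exp_given M (Sigman \<beta> S n (k - 1)) ((\<lambda>n k x. \<bar>Rv n k x\<bar>) n k) \<omega>)"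
  proof (rule generic[OF assms(1,3,4,5,6) S1i dpos, where G="\<lambda>n s. K * (s * c n)\<^sup>2"])
    show "\<And>n k x. 0 \<le> \<bar>Rv n k x\<bar>" by simp
    show "eventually (\<lambda>n. \<forall>k\<ge>1. (\<exists>H. integrable M H \<and> (AE x in M. \<bar>Rv n k x\<bar> \<le> H x)) \<and>
          (AE x in M. Sigman \<beta> S n (k - 1) x \<le> \<delta> \<longrightarrow> \<bar>Rv n k x\<bar> \<le> K * (S k x * c n)\<^sup>2)) sequentially"
      using evc
    proof eventually_elim
      case (elim n)
      have cnE: "0 \<le> c n" and nE: "0 < n" "real n * c n \<le> 2" using elim by auto
      show ?case
      proof (intro allI impI conjI)
        fix k :: nat assume k: "k \<ge> 1"
        show "\<exists>H. integrable M H \<and> (AE x in M. \<bar>Rv n k x\<bar> \<le> H x)"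
        proof (intro exI conjI)
          show "integrable M (\<lambda>x. f0 * (S k x * c n))" using Ski(1)[OF k] by simp
          show "AE x in M. \<bar>Rv n k x\<bar> \<le> f0 * (S k x * c n)"
            using basic[OF k cnE] by eventually_elim (use RB k cnE in blast)
        qed
        show "AE x in M. Sigman \<beta> S n (k - 1) x \<le> \<delta> \<longrightarrow> \<bar>Rv n k x\<bar> \<le> K * (S k x * c n)\<^sup>2"
          using basic[OF k cnE] by eventually_elim (use RB k cnE in blast)
      qed
    qed
    show "\<And>n. (\<lambda>s. K * (s * c n)\<^sup>2) \<in> borel_measurable borel" by measurable
    show "\<And>n. integrable M (\<lambda>x. K * (S 1 x * c n)\<^sup>2)"
      using assms(7) by (simp add: power_mult_distrib)
    show "\<And>n s. 0 \<le> s \<Longrightarrow> 0 \<le> K * (s * c n)\<^sup>2" using K0 by simp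
    show "\<And>n. 0 \<le> real n powr (4/3)" by simp
    have "(\<lambda>n. real n powr (4/3) * (c n)\<^sup>2 * (K * (\<integral>x. (S 1 x)\<^sup>2 \<partial>M))) \<longlonglongrightarrow> 0 * (K * (\<integral>x. (S 1 x)\<^sup>2 \<partial>M))"
      by (rule tendsto_mult[OF _ tendsto_const]) (use cn2_lim[of \<beta>] in \<open>simp add: c_def\<close>)
    moreover have "(\<lambda>n. real n powr (4/3) * (\<integral>x. K * (S 1 x * c n)\<^sup>2 \<partial>M))
        = (\<lambda>n. real n powr (4/3) * (c n)\<^sup>2 * (K * (\<integral>x. (S 1 x)\<^sup>2 \<partial>M)))"
      by (simp add: power_mult_distrib mult_ac)
    ultimately show "(\<lambda>n. real n powr (4/3) * (\<integral>x. K * (S 1 x * c n)\<^sup>2 \<partial>M)) \<longlonglongrightarrow> 0" by simp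
  qed
  define C2 where "C2 = 4 * f0 + 8 * K"
  define C3 where "C3 = 4 * f0\<^sup>2 + 16 * K\<^sup>2"
  have C2p: "C2 \<ge> 0" and C3p: "C3 \<ge> 0" using f0 K0 by (auto simp: C2_def C3_def)
  note G2 = Gfacts[OF C2p S1m assms(7) S1p]
  note G3 = Gfacts[OF C3p S1m assms(7) S1p]
  have c2: "sup_to_zero_in_prob M t (\<lambda>n k \<omega>. real n powr 2 *
        cond_exp_given M (Sigman \<beta> S n (k - 1)) ((\<lambda>n k x. \<bar>Dn \<beta> S n k x * Rv n k x\<bar>) n k) \<omega>)"
  proof (rule generic[OF assms(1,3,4,5,6) S1i dpos, where G="\<lambda>n s. C2 * min (s\<^sup>2) (s^3 / real n) / (real n)\<^sup>2"])
    show "\<And>n k x. 0 \<le> \<bar>Dn \<beta> S n k x * Rv n k x\<bar>" by simp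
    show "eventually (\<lambda>n. \<forall>k\<ge>1. (\<exists>H. integrable M H \<and> (AE x in M. \<bar>Dn \<beta> S n k x * Rv n k x\<bar> \<le> H x)) \<and>
          (AE x in M. Sigman \<beta> S n (k - 1) x \<le> \<delta> \<longrightarrow> \<bar>Dn \<beta> S n k x * Rv n k x\<bar>
             \<le> C2 * min ((S k x)\<^sup>2) ((S k x)^3 / real n) / (real n)\<^sup>2)) sequentially"
      using evc
    proof eventually_elim
      case (elim n)
      have cnE: "0 \<le> c n" and nE: "0 < n" "real n * c n \<le> 2" using elim by auto
      show ?case
      proof (intro allI impI conjI)
        fix k :: nat assume k: "k \<ge> 1"
        show "\<exists>H. integrable M H \<and> (AE x in M. \<bar>Dn \<beta> S n k x * Rv n k x\<bar> \<le> H x)"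
        proof (intro exI conjI)
          show "integrable M (\<lambda>x. f0 * (c n)\<^sup>2 * (S k x)\<^sup>2)" using Ski(2)[OF k] by simp
          show "AE x in M. \<bar>Dn \<beta> S n k x * Rv n k x\<bar> \<le> f0 * (c n)\<^sup>2 * (S k x)\<^sup>2"
            using basic[OF k cnE]
          proof eventually_elim
            case (elim x)
            then have r: "\<bar>Rv n k x\<bar> \<le> f0 * (S k x * c n)" using RB k cnE by blast
            have d: "0 \<le> S k x * c n" using elim cnE by simp
            have "\<bar>Dn \<beta> S n k x * Rv n k x\<bar> = (S k x * c n) * \<bar>Rv n k x\<bar>"
              unfolding Dc by (subst abs_mult) (simp only: abs_of_nonneg[OF d])
            also have "\<dots> \<le> (S k x * c n) * (f0 * (S k x * c n))" using r d by (rule mult_left_mono)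
            also have "\<dots> = f0 * (c n)\<^sup>2 * (S k x)\<^sup>2" by (simp add: power2_eq_square)
            finally show ?case .
          qed
        qed
        show "AE x in M. Sigman \<beta> S n (k - 1) x \<le> \<delta> \<longrightarrow> \<bar>Dn \<beta> S n k x * Rv n k x\<bar>
             \<le> C2 * min ((S k x)\<^sup>2) ((S k x)^3 / real n) / (real n)\<^sup>2"
          using basic[OF k cnE]
        proof eventually_elim
          case (elim x)
          show ?case
          proof
            assume sd: "Sigman \<beta> S n (k - 1) x \<le> \<delta>"
            have r: "\<bar>Rv n k x\<bar> \<le> f0 * (S k x * c n)" "\<bar>Rv n k x\<bar> \<le> K * (S k x * c n)\<^sup>2"
              using RB[OF k cnE] elim sd by blast+
            have d: "0 \<le> S k x * c n" using elim cnE by simp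
            have "\<bar>Dn \<beta> S n k x * Rv n k x\<bar> = (S k x * c n) * \<bar>Rv n k x\<bar>"
              unfolding Dc by (subst abs_mult) (simp only: abs_of_nonneg[OF d])
            also have "\<dots> \<le> C2 * min ((S k x)\<^sup>2) ((S k x)^3 / real n) / (real n)\<^sup>2"
              unfolding C2_def by (rule L2) (use elim r f0 K0 cnE nE in auto)
            finally show "\<bar>Dn \<beta> S n k x * Rv n k x\<bar> \<le> C2 * min ((S k x)\<^sup>2) ((S k x)^3 / real n) / (real n)\<^sup>2" .
          qed
        qed
      qed
    qed
  qed (use G2 in auto)
  have c3: "sup_to_zero_in_prob M t (\<lambda>n k \<omega>. real n powr 2 *
        cond_exp_given M (Sigman \<beta> S n (k - 1)) ((\<lambda>n k x. \<bar>Rv n k x\<bar>\<^sup>2) n k) \<omega>)"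
  proof (rule generic[OF assms(1,3,4,5,6) S1i dpos, where G="\<lambda>n s. C3 * min (s\<^sup>2) (s^3 / real n) / (real n)\<^sup>2"])
    show "\<And>n k x. 0 \<le> \<bar>Rv n k x\<bar>\<^sup>2" by simp
    show "eventually (\<lambda>n. \<forall>k\<ge>1. (\<exists>H. integrable M H \<and> (AE x in M. \<bar>Rv n k x\<bar>\<^sup>2 \<le> H x)) \<and>
          (AE x in M. Sigman \<beta> S n (k - 1) x \<le> \<delta> \<longrightarrow> \<bar>Rv n k x\<bar>\<^sup>2
             \<le> C3 * min ((S k x)\<^sup>2) ((S k x)^3 / real n) / (real n)\<^sup>2)) sequentially"
      using evc
    proof eventually_elim
      case (elim n)
      have cnE: "0 \<le> c n" and nE: "0 < n" "real n * c n \<le> 2" using elim by auto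
      show ?case
      proof (intro allI impI conjI)
        fix k :: nat assume k: "k \<ge> 1"
        show "\<exists>H. integrable M H \<and> (AE x in M. \<bar>Rv n k x\<bar>\<^sup>2 \<le> H x)"
        proof (intro exI conjI)
          show "integrable M (\<lambda>x. f0\<^sup>2 * (c n)\<^sup>2 * (S k x)\<^sup>2)" using Ski(2)[OF k] by simp
          show "AE x in M. \<bar>Rv n k x\<bar>\<^sup>2 \<le> f0\<^sup>2 * (c n)\<^sup>2 * (S k x)\<^sup>2"
            using basic[OF k cnE]
          proof eventually_elim
            case (elim x)
            then have r: "\<bar>Rv n k x\<bar> \<le> f0 * (S k x * c n)" using RB k cnE by blast
            have "\<bar>Rv n k x\<bar>\<^sup>2 \<le> (f0 * (S k x * c n))\<^sup>2" using r by (intro power_mono) auto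
            also have "\<dots> = f0\<^sup>2 * (c n)\<^sup>2 * (S k x)\<^sup>2" by (simp add: power_mult_distrib)
            finally show ?case .
          qed
        qed
        show "AE x in M. Sigman \<beta> S n (k - 1) x \<le> \<delta> \<longrightarrow> \<bar>Rv n k x\<bar>\<^sup>2
             \<le> C3 * min ((S k x)\<^sup>2) ((S k x)^3 / real n) / (real n)\<^sup>2"
          using basic[OF k cnE]
        proof eventually_elim
          case (elim x)
          show ?case
          proof
            assume sd: "Sigman \<beta> S n (k - 1) x \<le> \<delta>"
            have r: "\<bar>Rv n k x\<bar> \<le> f0 * (S k x * c n)" "\<bar>Rv n k x\<bar> \<le> K * (S k x * c n)\<^sup>2"
              using RB[OF k cnE] elim sd by blast+
            show "\<bar>Rv n k x\<bar>\<^sup>2 \<le> C3 * min ((S k x)\<^sup>2) ((S k x)^3 / real n) / (real n)\<^sup>2"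
              unfolding C3_def by (rule L3) (use elim r f0 K0 cnE nE in auto)
          qed
        qed
      qed
    qed
  qed (use G3 in auto)
  show ?thesis using c1 c2 c3 unfolding Rv_def by simp
qed


end
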